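(* For all partial Boolean functions $f:D\to\{0,1\}$ with $D\subseteq\{0,1\}^n$, we have $\mathrm{QS}(f)\le \mathrm{Q}(f)$.
   Context: Query model: for $x\in\{0,1\}^n$ the oracle $O_x$ acts by $O_x|i,b\rangle=|i,b\oplus x_i\rangle$. A $T$-query quantum algorithm applies input-independent unitaries $U_0,\dots,U_T$ interleaved with $O_x$ to $|0^m\rangle$, producing $|\psi_x\rangle=U_TO_x\cdots O_xU_0|0^m\rangle$. It then either measures the first qubit to produce an output bit, or outputs the mixed state obtained by tracing out a fixed subset of qubits. The trace distance is $\|\rho-\sigma\|_{tr}=\tfrac12\|\rho-\sigma\|_1$. $\mathrm{Q}(f)$ is the minimum $T$ such that some $T$-query algorithm outputs $f(x)$ with probability at least $2/3$ for every $x\in D$. $\mathrm{QS}(f)$ is the smallest $k$ such that some $k$-query algorithm outputs states $\rho_x$ ($x\in D$) with $\|\rho_x-\rho_y\|_{tr}\ge 1/6$ whenever $x,y\in D$ and $f(x)\ne f(y)$. *)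

theory Defs
  imports "Jordan_Normal_Form.Schur_Decomposition" "HOL-Library.Extended_Nat"
begin

text \<open>Computational basis states of
  m qubits are indexed by k < 2^m; qubit q of basis state k is bit q of k.
  The query register consists of qubits 0..r-1 (holding the index i = k mod 2^r, with
  2^r \<ge> n) and qubit r (holding b).  "First qubit" = qubit 0.\<close>

definition qbit :: "nat \<Rightarrow> nat \<Rightarrow> bool" where
  "qbit k q = odd (k div 2 ^ q)"

definition flip_bit :: "nat \<Rightarrow> nat \<Rightarrow> nat" where
  "flip_bit k q = (if qbit k q then k - 2 ^ q else k + 2 ^ q)"

definition unitary_mat :: "nat \<Rightarrow> complex mat \<Rightarrow> bool" where
  "unitary_mat N U \<longleftrightarrow> U \<in> carrier_mat N N \<and> mat_adjoint U * U = 1\<^sub>m N"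

text \<open>Query operator O_x |i,b,w> = |i, b xor x_i, w>; acts as identity on indices i \<ge> n.\<close>
definition query_oracle :: "nat \<Rightarrow> nat \<Rightarrow> bool list \<Rightarrow> complex mat" where
  "query_oracle m r x = mat (2 ^ m) (2 ^ m) (\<lambda>(j, k).
     (let i = k mod 2 ^ r in
      if j = (if i < length x \<and> x ! i then flip_bit k r else k) then 1 else 0))"

definition query_alg :: "nat \<Rightarrow> nat \<Rightarrow> nat \<Rightarrow> nat \<Rightarrow> (nat \<Rightarrow> complex mat) \<Rightarrow> bool" where
  "query_alg n m r T U \<longleftrightarrow> n \<le> 2 ^ r \<and> r < m \<and> (\<forall>t\<le>T. unitary_mat (2 ^ m) (U t))"

fun run :: "nat \<Rightarrow> nat \<Rightarrow> (nat \<Rightarrow> complex mat) \<Rightarrow> bool list \<Rightarrow> nat \<Rightarrow> complex vec" where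
  "run m r U x 0 = U 0 *\<^sub>v unit_vec (2 ^ m) 0"
| "run m r U x (Suc t) = U (Suc t) *\<^sub>v (query_oracle m r x *\<^sub>v run m r U x t)"

definition prob_out :: "complex vec \<Rightarrow> bool \<Rightarrow> real" where
  "prob_out psi b = (\<Sum>k\<in>{k. k < dim_vec psi \<and> qbit k 0 = b}. (cmod (psi $ k))\<^sup>2)"

text \<open>Partial trace of |psi><psi| over the set S of qubits.  Kept qubits
  K = {0..<m} - S, in increasing order, index the reduced state.\<close>
definition embed :: "nat \<Rightarrow> nat set \<Rightarrow> nat \<Rightarrow> nat \<Rightarrow> nat" where
  "embed m S a c = (let ks = sorted_list_of_set ({0..<m} - S); ts = sorted_list_of_set S in
     (\<Sum>j<length ks. if qbit a j then 2 ^ (ks ! j) else 0)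
   + (\<Sum>j<length ts. if qbit c j then 2 ^ (ts ! j) else 0))"

definition reduced_state :: "nat \<Rightarrow> nat set \<Rightarrow> complex vec \<Rightarrow> complex mat" where
  "reduced_state m S psi = mat (2 ^ (m - card S)) (2 ^ (m - card S)) (\<lambda>(a, b).
     \<Sum>c<2 ^ card S. psi $ embed m S a c * cnj (psi $ embed m S b c))"

text \<open>Schatten 1-norm: sum of singular values (square roots of the eigenvalues of A^* A,
  counted with multiplicity).  Trace distance = half of it.\<close>
definition trace_norm :: "complex mat \<Rightarrow> real" where
  "trace_norm A = sum_mset (image_mset (\<lambda>l. sqrt (Re l)) (proots (char_poly (mat_adjoint A * A))))"

definition trace_dist :: "complex mat \<Rightarrow> complex mat \<Rightarrow> real" where
  "trace_dist \<rho> \<sigma> = trace_norm (\<rho> - \<sigma>) / 2"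

definition computes :: "nat \<Rightarrow> bool list set \<Rightarrow> (bool list \<Rightarrow> bool) \<Rightarrow> nat \<Rightarrow> bool" where
  "computes n D f T \<longleftrightarrow> (\<exists>m r U. query_alg n m r T U \<and>
      (\<forall>x\<in>D. prob_out (run m r U x T) (f x) \<ge> 2/3))"

definition separates :: "nat \<Rightarrow> bool list set \<Rightarrow> (bool list \<Rightarrow> bool) \<Rightarrow> nat \<Rightarrow> bool" where
  "separates n D f k \<longleftrightarrow> (\<exists>m r U S. query_alg n m r k U \<and> S \<subseteq> {0..<m} \<and>
      (\<forall>x\<in>D. \<forall>y\<in>D. f x \<noteq> f y \<longrightarrow>
         trace_dist (reduced_state m S (run m r U x k)) (reduced_state m S (run m r U y k)) \<ge> 1/6))"

text \<open>Complexities as extended naturals (infimum of the empty set is \<infinity>).\<close>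
definition Q :: "nat \<Rightarrow> bool list set \<Rightarrow> (bool list \<Rightarrow> bool) \<Rightarrow> enat" where
  "Q n D f = (INF T\<in>{T. computes n D f T}. enat T)"

definition QS :: "nat \<Rightarrow> bool list set \<Rightarrow> (bool list \<Rightarrow> bool) \<Rightarrow> enat" where
  "QS n D f = (INF k\<in>{k. separates n D f k}. enat k)"

end

theory Submission imports Defs begin

lemma fb_facts:
  fixes j r :: nat
  shows "flip_bit j r mod 2^r = j mod 2^r \<and> qbit (flip_bit j r) r = (\<not> qbit j r)
        \<and> flip_bit (flip_bit j r) r = j"
proof (cases "qbit j r")
  case True
  hence o: "odd (j div 2^r)" unfolding qbit_def .
  have ge: "j \<ge> 2^r"
  proof (rule ccontr)
    assume "\<not> j \<ge> 2^r" hence "j div 2^r = 0" by simp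
    with o show False by simp
  qed
  have d: "(j - 2^r) div 2^r = j div 2^r - 1"
    using le_div_geq[of "2^r" j] ge by simp
  have md: "(j - 2^r) mod 2^r = j mod 2^r"
    using ge by (simp add: le_mod_geq)
  obtain k where k: "j div 2^r = 2*k+1" using o by (rule oddE)
  have e: "\<not> qbit (j - 2^r) r" unfolding qbit_def d k by simp
  show ?thesis using True e ge md unfolding flip_bit_def by simp
next
  case False
  hence o: "even (j div 2^r)" unfolding qbit_def by simp
  have d: "(j + 2^r) div 2^r = j div 2^r + 1" by simp
  have md: "(j + 2^r) mod 2^r = j mod 2^r" by simp
  have e: "qbit (j + 2^r) r" unfolding qbit_def d using o by simp
  show ?thesis using False e md unfolding flip_bit_def by simp
qed

lemma fb_lt:
  fixes j r m :: nat
  assumes "j < 2^m" "r < m"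
  shows "flip_bit j r < 2^m"
proof (cases "qbit j r")
  case True
  then show ?thesis using assms unfolding flip_bit_def by simp
next
  case False
  hence o: "even (j div 2^r)" unfolding qbit_def by simp
  have pm: "(2::nat)^m = 2^(m-r) * 2^r" using assms(2) by (simp flip: power_add)
  have "j div 2^r < 2^(m-r)" using assms(1) pm by (simp add: div_less_iff_less_mult)
  moreover have "even ((2::nat)^(m-r))" using assms(2) by simp
  ultimately have le: "j div 2^r + 2 \<le> 2^(m-r)" using o
    by (metis Suc_eq_plus1 Suc_lessI even_Suc add_2_eq_Suc' Suc_leI)
  have "j = j div 2^r * 2^r + j mod 2^r" by (rule div_mult_mod_eq[symmetric])
  moreover have "j mod 2^r < (2::nat)^r" by simp
  moreover have "(j div 2^r + 2) * 2^r = j div 2^r * 2^r + 2 * (2::nat)^r" by (simp add: distrib_right)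
  ultimately have "j + 2^r < (j div 2^r + 2) * 2^r" by linarith
  also have "\<dots> \<le> 2^(m-r) * 2^r" using le by (rule mult_right_mono) simp
  finally have "j + 2^r < 2^m" using pm by simp
  then show ?thesis using False unfolding flip_bit_def by simp
qed

definition nsq :: "complex vec \<Rightarrow> real" where
  "nsq v = (\<Sum>k<dim_vec v. (cmod (v $ k))\<^sup>2)"

lemma adj_idx: "A \<in> carrier_mat n n \<Longrightarrow> i < n \<Longrightarrow> j < n \<Longrightarrow> mat_adjoint A $$ (i,j) = cnj (A $$ (j,i))"
  unfolding mat_adjoint_def by (simp add: mat_of_rows_index)

lemma adj_dim: "A \<in> carrier_mat n n \<Longrightarrow> mat_adjoint A \<in> carrier_mat n n"
  unfolding mat_adjoint_def by auto

lemma nsq_c: "complex_of_real (nsq v) = (\<Sum>k<dim_vec v. v $ k * cnj (v $ k))"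
  unfolding nsq_def of_real_sum by (rule sum.cong, simp, rule complex_norm_square)

lemma unitary_nsq:
  assumes U: "unitary_mat N U" and v: "v \<in> carrier_vec N"
  shows "nsq (U *\<^sub>v v) = nsq v"
proof -
  have UC: "U \<in> carrier_mat N N" and UU: "mat_adjoint U * U = 1\<^sub>m N"
    using U unfolding unitary_mat_def by auto
  have orth: "(\<Sum>j<N. cnj (U$$(j,l)) * U$$(j,k)) = (if l = k then 1 else 0)" if "l < N" "k < N" for l k
  proof -
    have "(mat_adjoint U * U) $$ (l,k) = (\<Sum>j<N. mat_adjoint U $$ (l,j) * U $$ (j,k))"
      using UC adj_dim[OF UC] that
      by (simp add: scalar_prod_def row_def col_def atLeast0LessThan)
    also have "\<dots> = (\<Sum>j<N. cnj (U$$(j,l)) * U$$(j,k))"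
      using UC that by (intro sum.cong) (auto simp: adj_idx)
    finally show ?thesis using UU that by simp
  qed
  have ent: "(U *\<^sub>v v) $ j = (\<Sum>k<N. U$$(j,k) * v$k)" if "j < N" for j
    using UC v that by (simp add: scalar_prod_def row_def atLeast0LessThan)
  have "complex_of_real (nsq (U *\<^sub>v v)) = (\<Sum>j<N. (\<Sum>k<N. U$$(j,k) * v$k) * cnj (\<Sum>l<N. U$$(j,l) * v$l))"
    unfolding nsq_c using UC by (intro sum.cong) (simp_all add: ent del: index_mult_mat_vec)
  also have "\<dots> = (\<Sum>j<N. \<Sum>k<N. \<Sum>l<N. v$k * cnj (v$l) * (cnj (U$$(j,l)) * U$$(j,k)))"
    unfolding cnj_sum sum_product by (intro sum.cong refl) (simp add: mult_ac)
  also have "\<dots> = (\<Sum>k<N. \<Sum>j<N. \<Sum>l<N. v$k * cnj (v$l) * (cnj (U$$(j,l)) * U$$(j,k)))"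
    by (rule sum.swap)
  also have "\<dots> = (\<Sum>k<N. \<Sum>l<N. \<Sum>j<N. v$k * cnj (v$l) * (cnj (U$$(j,l)) * U$$(j,k)))"
    by (intro sum.cong refl sum.swap)
  also have "\<dots> = (\<Sum>k<N. \<Sum>l<N. v$k * cnj (v$l) * (\<Sum>j<N. cnj (U$$(j,l)) * U$$(j,k)))"
    by (simp add: sum_distrib_left)
  also have "\<dots> = (\<Sum>k<N. \<Sum>l<N. v$k * cnj (v$l) * (if l = k then 1 else 0))"
    by (intro sum.cong refl) (simp add: orth)
  also have "\<dots> = (\<Sum>k<N. v$k * cnj (v$k))"
    by (simp add: if_distrib cong: if_cong)
  also have "\<dots> = complex_of_real (nsq v)" unfolding nsq_c using v by simp
  finally show ?thesis by simp
qed

definition gq :: "nat \<Rightarrow> bool list \<Rightarrow> nat \<Rightarrow> nat" where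
  "gq r x j = (let i = j mod 2^r in if i < length x \<and> x!i then flip_bit j r else j)"

lemma gq_inv: "gq r x (gq r x j) = j"
  using fb_facts[of j r] unfolding gq_def Let_def by auto

lemma gq_lt: "j < 2^m \<Longrightarrow> r < m \<Longrightarrow> gq r x j < 2^m"
  using fb_lt[of j m r] unfolding gq_def Let_def by auto

lemma oracle_apply:
  assumes v: "v \<in> carrier_vec (2^m)" and r: "r < m" and j: "j < 2^m"
  shows "(query_oracle m r x *\<^sub>v v) $ j = v $ (gq r x j)"
proof -
  have "(query_oracle m r x *\<^sub>v v) $ j = (\<Sum>k<2^m. (if j = gq r x k then 1 else 0) * v $ k)"
    using v j unfolding query_oracle_def
    by (simp add: scalar_prod_def row_def atLeast0LessThan gq_def Let_def)
  also have "\<dots> = (\<Sum>k<2^m. (if k = gq r x j then v $ k else 0))"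
    by (intro sum.cong refl) (metis gq_inv mult_1 mult_zero_left)
  also have "\<dots> = v $ (gq r x j)" using gq_lt[OF j r] by simp
  finally show ?thesis .
qed

lemma oracle_nsq:
  assumes v: "v \<in> carrier_vec (2^m)" and r: "r < m"
  shows "nsq (query_oracle m r x *\<^sub>v v) = nsq v"
proof -
  have dim: "dim_vec (query_oracle m r x *\<^sub>v v) = 2^m" unfolding query_oracle_def by simp
  have bij: "bij_betw (gq r x) {..<2^m} {..<2^m}"
    by (rule bij_betw_byWitness[where f' = "gq r x"]) (auto simp: gq_inv gq_lt r)
  have "nsq (query_oracle m r x *\<^sub>v v) = (\<Sum>j<2^m. (cmod (v $ gq r x j))\<^sup>2)"
    unfolding nsq_def dim by (intro sum.cong refl) (simp add: oracle_apply[OF v r])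
  also have "\<dots> = (\<Sum>j<2^m. (cmod (v $ j))\<^sup>2)"
    using sum.reindex_bij_betw[OF bij, of "\<lambda>j. (cmod (v $ j))\<^sup>2"] by simp
  finally show ?thesis unfolding nsq_def using v by simp
qed


lemma bits_sum: "c < 2^k \<Longrightarrow> (\<Sum>j<k. if qbit c j then (2::nat)^j else 0) = c"
proof (induction k arbitrary: c)
  case 0 then show ?case by simp
next
  case (Suc k)
  have h: "c div 2 < 2^k" using Suc.prems by simp
  have "(\<Sum>j<Suc k. if qbit c j then (2::nat)^j else 0)
      = (if qbit c 0 then 1 else 0) + (\<Sum>j<k. if qbit c (Suc j) then 2^(Suc j) else 0)"
    by (subst sum.lessThan_Suc_shift) simp
  also have "(\<Sum>j<k. if qbit c (Suc j) then (2::nat)^(Suc j) else 0)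
      = 2 * (\<Sum>j<k. if qbit (c div 2) j then 2^j else 0)"
    unfolding sum_distrib_left
    by (intro sum.cong refl) (simp add: qbit_def div_mult2_eq)
  also have "\<dots> = 2 * (c div 2)" using Suc.IH[OF h] by simp
  finally show ?case by (simp add: qbit_def)
qed

lemma embed_S:
  assumes m: "m \<ge> 1" and a: "a < 2" and c: "c < 2^(m-1)"
  shows "embed m {1..<m} a c = a + 2 * c"
proof -
  have ks: "sorted_list_of_set ({0..<m} - {1..<m}) = [0]"
  proof -
    have "{0..<m} - {1..<m} = {0}" using m by auto
    thus ?thesis by simp
  qed
  have ts: "sorted_list_of_set {1..<m} = [1..<m]" by simp
  have s2: "(\<Sum>j<m-1. if qbit c j then (2::nat) ^ ([1..<m] ! j) else 0)
      = 2 * (\<Sum>j<m-1. if qbit c j then 2^j else 0)"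
    unfolding sum_distrib_left by (intro sum.cong refl) auto
  have a': "(\<Sum>j<length [0::nat]. if qbit a j then (2::nat) ^ ([0] ! j) else 0) = a"
    using a unfolding qbit_def by (cases a) auto
  show ?thesis unfolding embed_def Let_def ks ts
    using s2 bits_sum[OF c] a' by simp
qed

lemma sum2: "(\<Sum>k<2. g k) = g 0 + g (1::nat)"
  by (simp add: numeral_2_eq_2)

lemma tn2:
  fixes A :: "complex mat" and d :: real and e :: complex
  assumes A: "A \<in> carrier_mat 2 2" and "A $$ (0,0) = of_real d" and "A $$ (1,1) = - of_real d"
    and "A $$ (0,1) = e" and "A $$ (1,0) = cnj e"
  shows "trace_norm A = 2 * sqrt (d^2 + (cmod e)^2)"
proof -
  define s where "s = d^2 + (cmod e)^2"
  have s0: "s \<ge> 0" unfolding s_def by simp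
  define B where "B = mat_adjoint A * A"
  have B: "B \<in> carrier_mat 2 2" unfolding B_def using mult_carrier_mat[OF adj_dim[OF A] A] .
  have Bent: "B $$ (i,j) = (if i = j then complex_of_real s else 0)" if "i < 2" "j < 2" for i j
  proof -
    have "B $$ (i,j) = (\<Sum>k<2. mat_adjoint A $$ (i,k) * A $$ (k,j))"
      unfolding B_def using A adj_dim[OF A] that
      by (simp add: scalar_prod_def row_def col_def atLeast0LessThan)
    also have "\<dots> = (\<Sum>k<2. cnj (A $$ (k,i)) * A $$ (k,j))"
      using A that by (intro sum.cong) (auto simp: adj_idx)
    also have "\<dots> = (if i = j then complex_of_real s else 0)"
      using that assms unfolding sum2 s_def
      by (auto simp: less_2_cases_iff complex_eq_iff power2_eq_square cmod_def)
    finally show ?thesis .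
  qed
  have ut: "upper_triangular B" using Bent B unfolding upper_triangular_def by auto
  have dg: "diag_mat B = [complex_of_real s, complex_of_real s]"
    using B Bent by (simp add: diag_mat_def numeral_2_eq_2 upt_rec)
  have cp: "char_poly B = [:- complex_of_real s, 1:] * [:- complex_of_real s, 1:]"
    using char_poly_upper_triangular[OF B ut] dg by simp
  have pr: "proots (char_poly B) = {# complex_of_real s, complex_of_real s #}"
    unfolding cp by (subst proots_mult) (auto simp: proots_linear_factor)
  show ?thesis unfolding trace_norm_def B_def[symmetric] pr s_def[symmetric] using s0 by simp
qed

lemma oracle_carrier: "query_oracle m r x \<in> carrier_mat (2^m) (2^m)"
  unfolding query_oracle_def by simp

lemma nsq_unit: "N > 0 \<Longrightarrow> nsq (unit_vec N 0) = 1"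
  unfolding nsq_def
  by (subst sum.cong[OF refl, where h="\<lambda>k. if k = 0 then 1 else 0"]) (auto simp: unit_vec_def)

lemma run_ok:
  assumes qa: "query_alg n m r T U" and t: "t \<le> T"
  shows "run m r U x t \<in> carrier_vec (2^m) \<and> nsq (run m r U x t) = 1"
  using t
proof (induction t)
  case 0
  have U: "unitary_mat (2^m) (U 0)" using qa unfolding query_alg_def by auto
  hence "U 0 \<in> carrier_mat (2^m) (2^m)" unfolding unitary_mat_def by auto
  then show ?case using unitary_nsq[OF U, of "unit_vec (2^m) 0"] nsq_unit[of "2^m"] by auto
next
  case (Suc t)
  have r: "r < m" using qa unfolding query_alg_def by auto
  have U: "unitary_mat (2^m) (U (Suc t))" using qa Suc.prems unfolding query_alg_def by auto
  hence UC: "U (Suc t) \<in> carrier_mat (2^m) (2^m)" unfolding unitary_mat_def by auto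
  have IH: "run m r U x t \<in> carrier_vec (2^m)" "nsq (run m r U x t) = 1" using Suc by auto
  have w: "query_oracle m r x *\<^sub>v run m r U x t \<in> carrier_vec (2^m)"
    using IH(1) oracle_carrier by (rule_tac mult_mat_vec_carrier) auto
  show ?case using unitary_nsq[OF U w] oracle_nsq[OF IH(1) r] IH(2) UC w by auto
qed

lemma prob_sum:
  "prob_out psi False + prob_out psi True = nsq psi"
proof -
  have "{..<dim_vec psi} = {k. k < dim_vec psi \<and> qbit k 0 = False} \<union> {k. k < dim_vec psi \<and> qbit k 0 = True}"
    by auto
  thus ?thesis unfolding prob_out_def nsq_def
    by (simp add: sum.union_disjoint[symmetric] disjoint_iff)
qed

lemma prob_split:
  assumes m: "m \<ge> 1" and psi: "psi \<in> carrier_vec (2^m)" and a: "a < 2"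
  shows "prob_out psi (a = 1) = (\<Sum>c<2^(m-1). (cmod (psi $ (a + 2*c)))\<^sup>2)"
proof -
  have pm: "(2::nat)^m = 2 * 2^(m-1)" using m by (cases m) auto
  have eq: "{k. k < dim_vec psi \<and> qbit k 0 = (a = 1)} = (\<lambda>c. a + 2*c) ` {..<2^(m-1)}"
  proof (rule Set.set_eqI, rule iffI)
    fix k assume k: "k \<in> {k. k < dim_vec psi \<and> qbit k 0 = (a = 1)}"
    have km: "k mod 2 = a" using a k
      by (cases "a = 0") (auto simp: qbit_def odd_iff_mod_2_eq_one even_iff_mod_2_eq_zero)
    have kl: "k < 2 * 2^(m-1)" using k psi pm by simp
    have "k div 2 < 2^(m-1)" using kl by (simp add: div_less_iff_less_mult mult.commute)
    moreover have "k = a + 2 * (k div 2)" using km div_mult_mod_eq[of k 2] by linarith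
    ultimately show "k \<in> (\<lambda>c. a + 2*c) ` {..<2^(m-1)}"
      by (intro image_eqI[where x = "k div 2"]) auto
  next
    fix k assume "k \<in> (\<lambda>c. a + 2*c) ` {..<2^(m-1)}"
    then obtain c where c: "c < 2^(m-1)" "k = a + 2*c" by auto
    have "k < 2^m" using c a pm by linarith
    moreover have "qbit k 0 = (a = 1)" using c(2) a unfolding qbit_def by (cases "a = 0") auto
    ultimately show "k \<in> {k. k < dim_vec psi \<and> qbit k 0 = (a = 1)}"
      using psi by simp
  qed
  have inj: "inj_on (\<lambda>c. a + 2*c) {..<2^(m-1)}" by (auto simp: inj_on_def)
  show ?thesis unfolding prob_out_def eq sum.reindex[OF inj] by simp
qed

lemma rs_props:
  assumes m: "m \<ge> 1" and psi: "psi \<in> carrier_vec (2^m)"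
  shows "reduced_state m {1..<m} psi \<in> carrier_mat 2 2"
    and "a < 2 \<Longrightarrow> b < 2 \<Longrightarrow> reduced_state m {1..<m} psi $$ (a,b)
          = (\<Sum>c<2^(m-1). psi $ (a + 2*c) * cnj (psi $ (b + 2*c)))"
proof -
  have cs: "card {1..<m} = m - 1" by simp
  have mm: "m - (m - 1) = 1" using m by simp
  show "reduced_state m {1..<m} psi \<in> carrier_mat 2 2"
    unfolding reduced_state_def cs mm by simp
  assume a: "a < 2" and b: "b < 2"
  show "reduced_state m {1..<m} psi $$ (a,b)
          = (\<Sum>c<2^(m-1). psi $ (a + 2*c) * cnj (psi $ (b + 2*c)))"
    unfolding reduced_state_def cs mm using a b
  proof (simp, intro sum.cong refl)
    fix c :: nat assume "c \<in> {..<2^(m-Suc 0)}"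
    thus "psi $ embed m {Suc 0..<m} a c * cnj (psi $ embed m {Suc 0..<m} b c) =
          psi $ (a + 2 * c) * cnj (psi $ (b + 2 * c))"
      using embed_S[OF m a, of c] embed_S[OF m b, of c] by simp
  qed
qed

lemma rs_diag:
  assumes m: "m \<ge> 1" and psi: "psi \<in> carrier_vec (2^m)" and a: "a < 2"
  shows "reduced_state m {1..<m} psi $$ (a,a) = complex_of_real (prob_out psi (a = 1))"
  unfolding rs_props(2)[OF m psi a a] prob_split[OF m psi a] of_real_sum
  by (rule sum.cong, simp, rule complex_norm_square[symmetric])

lemma rs_herm:
  assumes m: "m \<ge> 1" and psi: "psi \<in> carrier_vec (2^m)"
  shows "reduced_state m {1..<m} psi $$ (1,0) = cnj (reduced_state m {1..<m} psi $$ (0,1))"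
  using rs_props(2)[OF m psi, of 1 0] rs_props(2)[OF m psi, of 0 1] by (simp add: mult.commute)


lemma comp_sep:
  assumes "computes n D f T"
  shows "separates n D f T"
proof -
  obtain m r U where qa: "query_alg n m r T U"
    and H: "\<forall>x\<in>D. prob_out (run m r U x T) (f x) \<ge> 2/3"
    using assms unfolding computes_def by blast
  have m: "m \<ge> 1" using qa unfolding query_alg_def by auto
  define S where "S = {1..<m}"
  have "trace_dist (reduced_state m S (run m r U x T)) (reduced_state m S (run m r U y T)) \<ge> 1/6"
    if x: "x \<in> D" and y: "y \<in> D" and fxy: "f x \<noteq> f y" for x y
  proof -
    define px where "px = run m r U x T"
    define py where "py = run m r U y T"
    have cx: "px \<in> carrier_vec (2^m)" "nsq px = 1" using run_ok[OF qa, of T x] unfolding px_def by auto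
    have cy: "py \<in> carrier_vec (2^m)" "nsq py = 1" using run_ok[OF qa, of T y] unfolding py_def by auto
    have sx: "prob_out px True = 1 - prob_out px False" using prob_sum[of px] cx by simp
    have sy: "prob_out py True = 1 - prob_out py False" using prob_sum[of py] cy by simp
    define d where "d = prob_out px False - prob_out py False"
    have hx: "prob_out px (f x) \<ge> 2/3" using H x unfolding px_def by auto
    have hy: "prob_out py (f y) \<ge> 2/3" using H y unfolding py_def by auto
    have dge: "\<bar>d\<bar> \<ge> 1/3"
    proof (cases "f x")
      case True
      hence "f y = False" using fxy by simp
      thus ?thesis using True hx hy sx unfolding d_def by auto
    next
      case False
      hence "f y = True" using fxy by simp
      thus ?thesis using False hx hy sy unfolding d_def by auto
    qed
    define A where "A = reduced_state m S px - reduced_state m S py"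
    have RX: "reduced_state m S px \<in> carrier_mat 2 2" using rs_props(1)[OF m cx(1)] unfolding S_def .
    have RY: "reduced_state m S py \<in> carrier_mat 2 2" using rs_props(1)[OF m cy(1)] unfolding S_def .
    have AC: "A \<in> carrier_mat 2 2" unfolding A_def using minus_carrier_mat[OF RY] RX by blast
    have Aij: "A $$ (i,j) = reduced_state m S px $$ (i,j) - reduced_state m S py $$ (i,j)"
      if "i < 2" "j < 2" for i j
      unfolding A_def using RX RY that by simp
    have A00: "A $$ (0,0) = of_real d"
      using Aij[of 0 0] rs_diag[OF m cx(1), of 0] rs_diag[OF m cy(1), of 0]
      unfolding S_def d_def by simp
    have A11: "A $$ (1,1) = - of_real d"
      using Aij[of 1 1] rs_diag[OF m cx(1), of 1] rs_diag[OF m cy(1), of 1] sx sy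
      unfolding S_def d_def by simp
    have A10: "A $$ (1,0) = cnj (A $$ (0,1))"
      using Aij[of 1 0] Aij[of 0 1] rs_herm[OF m cx(1)] rs_herm[OF m cy(1)]
      unfolding S_def by simp
    have tn: "trace_norm A = 2 * sqrt (d^2 + (cmod (A $$ (0,1)))^2)"
      by (rule tn2[OF AC A00 A11 refl A10])
    have "\<bar>d\<bar> = sqrt (d^2)" by simp
    also have "\<dots> \<le> sqrt (d^2 + (cmod (A $$ (0,1)))^2)" by (rule real_sqrt_le_mono) simp
    finally have sq: "\<bar>d\<bar> \<le> sqrt (d^2 + (cmod (A $$ (0,1)))^2)" .
    have "trace_dist (reduced_state m S px) (reduced_state m S py) \<ge> 1/3"
      unfolding trace_dist_def A_def[symmetric] tn using dge sq by linarith
    thus ?thesis unfolding px_def py_def by simp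
  qed
  moreover have "S \<subseteq> {0..<m}" unfolding S_def by auto
  ultimately show ?thesis unfolding separates_def using qa by blast
qed

theorem proposition6:
  fixes n :: nat and D :: "bool list set" and f :: "bool list \<Rightarrow> bool"
  assumes "D \<subseteq> {x. length x = n}"
  shows "QS n D f \<le> Q n D f"
  unfolding QS_def Q_def
proof (rule INF_greatest)
  fix T assume "T \<in> {T. computes n D f T}"
  hence "T \<in> {k. separates n D f k}" using comp_sep by simp
  thus "(INF k\<in>{k. separates n D f k}. enat k) \<le> enat T" by (rule INF_lower)
qed

end
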